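(* Let $n\ge1$ and $d\ge1$ be integers, $p\in(0,1)$, $\delta\in(0,1)$, and let $I\subseteq[n]$ be a fixed set with $|I|\le d$. Let $m$ be a positive integer with $$m\ \ge\ \max_{0\le w\le d-1}\frac{(d-w)\ln n+\ln(1/\delta)+\ln(d^22^d)}{\min\left(\ln\frac{1}{1-2p^d+2p^{2d-w}},\ \ln\frac{1}{1+p^d-p^w}\right)}$$ (maximum over integers $w$). Let $M$ be a random $m\times n$ matrix whose entries are independent, each equal to $0$ with probability $p$ and to $1$ with probability $1-p$. Then with probability at least $1-\delta$ the matrix $M$ is $(I,d)$-separable.
   Context: For $J\subseteq[n]$ and $a\in\{0,1\}^n$, $T(J,a)=1$ if $a_j=1$ for some $j\in J$ and $T(J,a)=0$ otherwise. For an $m\times n$ 0/1 matrix $M$ with rows $M_1,\dots,M_m$, $T(J,M)=(T(J,M_i))_{i=1}^m$. The matrix $M$ is $(I,d)$-separable if for every $J\subseteq[n]$ with $|J|\le d$ and $J\ne I$ we have $T(J,M)\ne T(I,M)$. *)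

theory Defs
  imports "HOL-Probability.Probability"
begin

text \<open>A 0/1 vector a in {0,1}^n is a function nat => bool on the index set {1..n}
  (True = 1). T(J,a) = 1 iff a_j = 1 for some j in J.\<close>
definition T :: "nat set \<Rightarrow> (nat \<Rightarrow> bool) \<Rightarrow> bool" where
  "T J a = (\<exists>j\<in>J. a j)"

text \<open>An m x n 0/1 matrix is a function M :: nat \<times> nat => bool, entry (i,j) for
  i in {1..m}, j in {1..n}. Row i is (\<lambda>j. M (i,j)). T(J,M) is the vector of T(J,M_i).\<close>
definition T_mat :: "nat \<Rightarrow> nat set \<Rightarrow> (nat \<times> nat \<Rightarrow> bool) \<Rightarrow> (nat \<Rightarrow> bool)" where
  "T_mat m J M = (\<lambda>i. if i \<in> {1..m} then T J (\<lambda>j. M (i, j)) else False)"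

definition separable :: "nat \<Rightarrow> nat \<Rightarrow> (nat \<times> nat \<Rightarrow> bool) \<Rightarrow> nat set \<Rightarrow> nat \<Rightarrow> bool" where
  "separable m n M I d =
     (\<forall>J. J \<subseteq> {1..n} \<and> card J \<le> d \<and> J \<noteq> I \<longrightarrow> T_mat m J M \<noteq> T_mat m I M)"

definition random_matrix :: "nat \<Rightarrow> nat \<Rightarrow> real \<Rightarrow> (nat \<times> nat \<Rightarrow> bool) pmf" where
  "random_matrix m n p = Pi_pmf ({1..m} \<times> {1..n}) False (\<lambda>_. bernoulli_pmf (1 - p))"

end

theory Submission
  imports Defs
begin


lemma prob_pair_times:
  "measure_pmf.prob (pair_pmf M N) (A \<times> B) = measure_pmf.prob M A * measure_pmf.prob N B"
proof -
  have "measure_pmf.prob (pair_pmf M N) (A \<times> B) = measure_pmf.prob (pair_pmf M N) ((A \<times> B) \<inter> set_pmf (pair_pmf M N))"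
    by (rule measure_Int_set_pmf[symmetric])
  also have "(A \<times> B) \<inter> set_pmf (pair_pmf M N) = (A \<inter> set_pmf M) \<times> (B \<inter> set_pmf N)" by auto
  also have "measure_pmf.prob (pair_pmf M N) \<dots> = measure_pmf.prob M (A \<inter> set_pmf M) * measure_pmf.prob N (B \<inter> set_pmf N)"
    by (intro measure_pmf_prob_product) auto
  finally show ?thesis by (simp add: measure_Int_set_pmf)
qed

definition Zs :: "nat \<Rightarrow> nat set \<Rightarrow> (nat \<times> nat \<Rightarrow> bool) set" where
  "Zs r S = {g. \<forall>j\<in>S. \<not> g (r, j)}"

lemma zero_prob:
  fixes r :: nat
  assumes "S \<subseteq> {1..n}" "0 \<le> p" "p \<le> 1"
  shows "measure_pmf.prob (Pi_pmf ({r}\<times>{1..n}) False (\<lambda>_. bernoulli_pmf (1-p))) (Zs r S) = p ^ card S"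
proof -
  have "Zs r S = Pi ({r}\<times>{1..n}) (\<lambda>x. if snd x \<in> S then {False} else UNIV)"
    using assms(1) by (auto simp: Zs_def Pi_def)
  hence "measure_pmf.prob (Pi_pmf ({r}\<times>{1..n}) False (\<lambda>_. bernoulli_pmf (1-p))) (Zs r S)
     = (\<Prod>x\<in>{r}\<times>{1..n}. measure_pmf.prob (bernoulli_pmf (1-p)) (if snd x \<in> S then {False} else UNIV))"
    by (simp add: measure_Pi_pmf_Pi)
  also have "\<dots> = (\<Prod>x\<in>{r}\<times>{1..n}. if snd x \<in> S then p else 1)"
    using assms by (intro prod.cong) (auto simp: measure_pmf_single)
  also have "\<dots> = (\<Prod>x\<in>{x\<in>{r}\<times>{1..n}. snd x \<in> S}. p)"
    by (subst prod.inter_filter) auto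
  also have "{x\<in>{r}\<times>{1..n}. snd x \<in> S} = (\<lambda>j. (r,j)) ` S" using assms(1) by auto
  also have "(\<Prod>x\<in>(\<lambda>j. (r,j)) ` S. p) = p ^ card S"
    by (simp add: card_image inj_on_def)
  finally show ?thesis .
qed

lemma row_prob:
  fixes r :: nat
  assumes "I \<subseteq> {1..n}" "J \<subseteq> {1..n}" "0 \<le> p" "p \<le> 1"
  shows "measure_pmf.prob (Pi_pmf ({r}\<times>{1..n}) False (\<lambda>_. bernoulli_pmf (1-p)))
           {g. T J (\<lambda>j. g (r, j)) = T I (\<lambda>j. g (r, j))}
         = 1 - p ^ card I - p ^ card J + 2 * p ^ card (I \<union> J)"
proof -
  let ?P = "Pi_pmf ({r}\<times>{1..n}) False (\<lambda>_. bernoulli_pmf (1-p))"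
  have e: "{g. T J (\<lambda>j. g (r, j)) = T I (\<lambda>j. g (r, j))} = Zs r (I \<union> J) \<union> (UNIV - (Zs r I \<union> Zs r J))"
    by (auto simp: T_def Zs_def)
  have i: "Zs r I \<inter> Zs r J = Zs r (I \<union> J)" by (auto simp: Zs_def)
  have "measure_pmf.prob ?P (Zs r (I \<union> J) \<union> (UNIV - (Zs r I \<union> Zs r J)))
      = measure_pmf.prob ?P (Zs r (I \<union> J)) + measure_pmf.prob ?P (UNIV - (Zs r I \<union> Zs r J))"
    by (intro measure_pmf.finite_measure_Union) (auto simp: Zs_def)
  also have "measure_pmf.prob ?P (UNIV - (Zs r I \<union> Zs r J)) = 1 - measure_pmf.prob ?P (Zs r I \<union> Zs r J)"
    using measure_pmf.prob_compl[of "Zs r I \<union> Zs r J" ?P] by simp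
  also have "measure_pmf.prob ?P (Zs r I \<union> Zs r J) = measure_pmf.prob ?P (Zs r I) + measure_pmf.prob ?P (Zs r J) - measure_pmf.prob ?P (Zs r I \<inter> Zs r J)"
    by (intro measure_Un3) (auto simp: fmeasurable_def measure_pmf.emeasure_eq_measure)
  finally have *: "measure_pmf.prob ?P {g. T J (\<lambda>j. g (r, j)) = T I (\<lambda>j. g (r, j))} =
     measure_pmf.prob ?P (Zs r (I \<union> J)) + (1 - (measure_pmf.prob ?P (Zs r I) + measure_pmf.prob ?P (Zs r J) - measure_pmf.prob ?P (Zs r (I \<union> J))))"
    unfolding e i .
  have u: "I \<union> J \<subseteq> {1..n}" using assms by auto
  show ?thesis unfolding * zero_prob[OF assms(1) assms(3,4)] zero_prob[OF assms(2) assms(3,4)] zero_prob[OF u assms(3,4)]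
    by simp
qed

lemma rows_prob:
  assumes "I \<subseteq> {1..n}" "J \<subseteq> {1..n}" "0 \<le> p" "p \<le> 1"
  shows "measure_pmf.prob (Pi_pmf ({1..k}\<times>{1..n}) False (\<lambda>_. bernoulli_pmf (1-p)))
           {M. \<forall>i\<in>{1..k}. T J (\<lambda>j. M (i, j)) = T I (\<lambda>j. M (i, j))}
         = (1 - p ^ card I - p ^ card J + 2 * p ^ card (I \<union> J)) ^ k"
proof (induction k)
  case 0
  then show ?case by simp
next
  case (Suc k)
  let ?Q = "(\<lambda>_::nat\<times>nat. bernoulli_pmf (1-p))"
  let ?A = "{1..k}\<times>{1..n}" and ?B = "{Suc k}\<times>{1..n}"
  let ?h = "(\<lambda>(f,g) x. if x \<in> ?A then f x else g x) :: (nat\<times>nat\<Rightarrow>bool)\<times>(nat\<times>nat\<Rightarrow>bool) \<Rightarrow> _"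
  let ?E = "\<lambda>k. {M. \<forall>i\<in>{1..k}. T J (\<lambda>j. M (i, j)) = T I (\<lambda>j. M (i, j))}"
  let ?F = "{g. T J (\<lambda>j. g (Suc k, j)) = T I (\<lambda>j. g (Suc k, j))}"
  have U: "{1..Suc k}\<times>{1..n} = ?A \<union> ?B" by auto
  have P: "Pi_pmf ({1..Suc k}\<times>{1..n}) False ?Q = map_pmf ?h (pair_pmf (Pi_pmf ?A False ?Q) (Pi_pmf ?B False ?Q))"
    unfolding U by (intro Pi_pmf_union) auto
  have t1: "T S (\<lambda>j. ?h (f,g) (i, j)) = T S (\<lambda>j. f (i, j))" if "S \<subseteq> {1..n}" "i \<in> {1..k}" for S f g i
    using that unfolding T_def by (auto intro!: bexI)
  have t2: "T S (\<lambda>j. ?h (f,g) (Suc k, j)) = T S (\<lambda>j. g (Suc k, j))" for S f g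
    by (auto simp: T_def)
  have pre: "?h -` ?E (Suc k) = ?E k \<times> ?F"
  proof (intro set_eqI iffI)
    fix x assume x: "x \<in> ?h -` ?E (Suc k)"
    obtain f g where fg: "x = (f,g)" by (cases x)
    have x': "\<forall>i\<in>{1..Suc k}. T J (\<lambda>j. ?h (f,g) (i,j)) = T I (\<lambda>j. ?h (f,g) (i,j))"
      using x unfolding fg by (simp only: vimage_eq mem_Collect_eq)
    have "T J (\<lambda>j. f (i, j)) = T I (\<lambda>j. f (i, j))" if i: "i \<in> {1..k}" for i
    proof -
      have "i \<in> {1..Suc k}" using i by auto
      from x'[rule_format, OF this] show ?thesis
        unfolding t1[OF assms(1) i] t1[OF assms(2) i] .
    qed
    moreover have "T J (\<lambda>j. g (Suc k, j)) = T I (\<lambda>j. g (Suc k, j))"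
      using x'[rule_format, of "Suc k"] unfolding t2 by simp
    ultimately show "x \<in> ?E k \<times> ?F" using fg by simp
  next
    fix x assume x: "x \<in> ?E k \<times> ?F"
    obtain f g where fg: "x = (f,g)" by (cases x)
    show "x \<in> ?h -` ?E (Suc k)"
    proof -
      have "T J (\<lambda>j. ?h (f,g) (i, j)) = T I (\<lambda>j. ?h (f,g) (i, j))" if i: "i \<in> {1..Suc k}" for i
      proof (cases "i = Suc k")
        case True
        then show ?thesis using x fg t2[of J f g] t2[of I f g] by simp
      next
        case False
        then have ik: "i \<in> {1..k}" using i by auto
        then show ?thesis using x fg t1[OF assms(1) ik] t1[OF assms(2) ik] by simp
      qed
      then show ?thesis using fg by simp
    qed
  qed
  have "measure_pmf.prob (Pi_pmf ({1..Suc k}\<times>{1..n}) False ?Q) (?E (Suc k))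
      = measure_pmf.prob (Pi_pmf ?A False ?Q) (?E k) * measure_pmf.prob (Pi_pmf ?B False ?Q) ?F"
    unfolding P measure_map_pmf pre prob_pair_times ..
  also have "measure_pmf.prob (Pi_pmf ?B False ?Q) ?F = 1 - p ^ card I - p ^ card J + 2 * p ^ card (I \<union> J)"
    by (rule row_prob[OF assms])
  finally show ?case using Suc.IH by simp
qed



lemma q_bound:
  fixes p :: real and I J :: "nat set"
  assumes p: "0 < p" "p < 1" and fin: "finite I" "finite J" and ne: "J \<noteq> I"
    and cJ: "card J \<le> d" and cI: "card I \<le> d"
  defines "kk \<equiv> max 1 (card (J - I))"
  shows "1 - p ^ card I - p ^ card J + 2 * p ^ card (I \<union> J)
     \<le> max (1 - 2 * p ^ d + 2 * p ^ (2 * d - (d - kk))) (1 + p ^ d - p ^ (d - kk))"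
proof -
  define a where "a = card I"
  define b where "b = card J"
  define k where "k = card (J - I)"
  define w where "w = card (I \<inter> J)"
  have c: "card (I \<union> J) = a + k"
  proof -
    have "I \<union> J = I \<union> (J - I)" by auto
    moreover have "card (I \<union> (J - I)) = card I + card (J - I)"
      by (intro card_Un_disjoint) (use fin in auto)
    ultimately show ?thesis by (simp add: a_def k_def)
  qed
  have bw: "b = w + k"
  proof -
    have "J = (I \<inter> J) \<union> (J - I)" by auto
    moreover have "card ((I \<inter> J) \<union> (J - I)) = card (I \<inter> J) + card (J - I)"
      by (intro card_Un_disjoint) (use fin in auto)
    ultimately show ?thesis by (simp add: b_def w_def k_def)
  qed
  have wa: "w \<le> a" unfolding w_def a_def by (intro card_mono) (use fin in auto)
  have bd: "b \<le> d" "a \<le> d" using cJ cI by (auto simp: a_def b_def)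
  have p0: "0 \<le> p" "p \<le> 1" using p by auto
  have dec: "\<And>x y. x \<le> y \<Longrightarrow> p ^ y \<le> p ^ x" using p0 by (intro power_decreasing) auto
  show ?thesis
  proof (cases "k = 0")
    case True
    then have kk1: "kk = 1" by (simp add: kk_def k_def)
    have "J \<subseteq> I" using True fin by (simp add: k_def)
    then have "J \<subset> I" using ne by auto
    then have ba: "b < a" unfolding a_def b_def using fin by (intro psubset_card_mono) auto
    have q: "1 - p ^ a - p ^ b + 2 * p ^ (a + k) = 1 + p ^ a - p ^ b" using True by simp
    have "p ^ b * (1 - p) \<le> p ^ b * (1 - p ^ (a - b))"
      using dec[of 1 "a - b"] ba p0 by (intro mult_left_mono) auto
    moreover have "p ^ b * (1 - p ^ (a - b)) = p ^ b - p ^ a"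
      using ba by (simp add: right_diff_distrib power_add[symmetric])
    moreover have "p ^ (d - 1) * (1 - p) \<le> p ^ b * (1 - p)"
      using dec[of b "d - 1"] ba bd p0 by (intro mult_right_mono) auto
    moreover have "p ^ (d - 1) * (1 - p) = p ^ (d - 1) - p ^ d"
    proof -
      have "d = Suc (d - 1)" using bd ba by simp
      then have "p ^ d = p ^ (d - 1) * p" by (metis power_Suc2)
      then show ?thesis by (simp add: right_diff_distrib)
    qed
    ultimately have "1 + p ^ a - p ^ b \<le> 1 + p ^ d - p ^ (d - 1)" by linarith
    then show ?thesis unfolding kk1 using q c by (simp add: a_def b_def)
  next
    case False
    then have kk: "kk = k" and k1: "k \<ge> 1" by (auto simp: kk_def k_def)
    have kd: "k \<le> d" using bw bd by simp
    have e1: "2 * d - (d - k) = d + k" using kd by simp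
    have pd: "p ^ (d - k) * p ^ k = p ^ d" using kd by (simp add: power_add[symmetric])
    have pk: "p ^ k \<le> 1" using p0 by (simp add: power_le_one)
    have q: "1 - p ^ a - p ^ b + 2 * p ^ (a + k) \<le> max (1 - 2 * p ^ d + 2 * p ^ (d + k)) (1 + p ^ d - p ^ (d - k))"
    proof (cases "a \<le> d - k")
      case True
      have "p ^ (a + k) \<le> p ^ b" using dec[of b "a + k"] bw wa by simp
      then have "1 - p ^ a - p ^ b + 2 * p ^ (a + k) \<le> 1 - p ^ a * (1 - p ^ k)"
        by (simp add: power_add algebra_simps)
      also have "\<dots> \<le> 1 - p ^ (d - k) * (1 - p ^ k)"
        using dec[OF True] pk by (intro diff_left_mono mult_right_mono) auto
      also have "\<dots> = 1 + p ^ d - p ^ (d - k)" using pd by (simp add: algebra_simps)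
      finally show ?thesis by simp
    next
      case False
      have "p ^ d \<le> p ^ b" using dec[of b d] bd by simp
      then have "1 - p ^ a - p ^ b + 2 * p ^ (a + k) \<le> 1 - p ^ d + p ^ a * (2 * p ^ k - 1)"
        by (simp add: power_add algebra_simps)
      also have "\<dots> \<le> max (1 - 2 * p ^ d + 2 * p ^ (d + k)) (1 + p ^ d - p ^ (d - k))"
      proof (cases "2 * p ^ k - 1 \<ge> 0")
        case True
        have "p ^ a \<le> p ^ (d - k)" using dec[of "d - k" a] False by simp
        then have "p ^ a * (2 * p ^ k - 1) \<le> p ^ (d - k) * (2 * p ^ k - 1)"
          using True by (intro mult_right_mono) auto
        also have "\<dots> = 2 * p ^ d - p ^ (d - k)" using pd by (simp add: algebra_simps)
        finally show ?thesis by simp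
      next
        case False
        have "p ^ d \<le> p ^ a" using dec[of a d] bd by simp
        then have "p ^ a * (2 * p ^ k - 1) \<le> p ^ d * (2 * p ^ k - 1)"
          using False by (intro mult_right_mono_neg) auto
        also have "\<dots> = 2 * p ^ (d + k) - p ^ d" by (simp add: power_add algebra_simps)
        finally show ?thesis by simp
      qed
      finally show ?thesis .
    qed
    show ?thesis using q unfolding kk e1 using c by (simp add: a_def b_def)
  qed
qed



lemma count_bound:
  fixes I :: "nat set"
  assumes I: "I \<subseteq> {1..n}" and n: "n \<ge> 1" and d: "d \<ge> 1"
  shows "(\<Sum>J\<in>{J. J \<subseteq> {1..n} \<and> card J \<le> d \<and> J \<noteq> I}. 1 / real n ^ max 1 (card (J - I)))
         \<le> 2 ^ card I * ((1 + real (n - card I)) / n + (real d - 1))"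
proof -
  define S where "S = {J. J \<subseteq> {1..n} \<and> card J \<le> d \<and> J \<noteq> I}"
  define X where "X = {1..n} - I"
  define U where "U = {K. K \<subseteq> X \<and> card K \<le> d}"
  define g where "g = (\<lambda>K::nat set. 1 / real n ^ max 1 (card K))"
  define \<phi> where "\<phi> = (\<lambda>J::nat set. (J \<inter> I, J - I))"
  have finI: "finite I" using I finite_subset by blast
  have finX: "finite X" by (simp add: X_def)
  have finU: "finite U" unfolding U_def using finX by (auto intro: finite_subset[of _ "Pow X"])
  have finS: "finite S" unfolding S_def by (auto intro: finite_subset[of _ "Pow {1..n}"])
  have gnn: "\<And>K. 0 \<le> g K" by (simp add: g_def)
  have "(\<Sum>J\<in>S. g (J - I)) = (\<Sum>y\<in>\<phi> ` S. g (snd y))"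
    by (subst sum.reindex) (auto simp: inj_on_def \<phi>_def)
  also have "\<dots> \<le> (\<Sum>y\<in>Pow I \<times> U. g (snd y))"
  proof (intro sum_mono2)
    show "finite (Pow I \<times> U)" using finI finU by simp
    show "\<phi> ` S \<subseteq> Pow I \<times> U"
    proof
      fix y assume "y \<in> \<phi> ` S"
      then obtain J where J: "J \<in> S" "y = \<phi> J" by auto
      have "card (J - I) \<le> card J" using J(1) by (intro card_mono) (auto simp: S_def intro: finite_subset)
      then show "y \<in> Pow I \<times> U" using J by (auto simp: \<phi>_def U_def X_def S_def)
    qed
  qed (simp add: gnn)
  also have "\<dots> = (\<Sum>A\<in>Pow I. \<Sum>K\<in>U. g K)"
    by (subst sum.cartesian_product) (simp add: case_prod_unfold)
  also have "\<dots> = 2 ^ card I * (\<Sum>K\<in>U. g K)"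
    using finI by (simp add: card_Pow)
  also have "(\<Sum>K\<in>U. g K) = (\<Sum>k\<in>{0..d}. \<Sum>K\<in>{K\<in>U. card K = k}. g K)"
    by (rule sum.group[symmetric]) (use finU in \<open>auto simp: U_def\<close>)
  also have "\<dots> = (\<Sum>k\<in>{0..d}. real (card X choose k) / real n ^ max 1 k)"
  proof (intro sum.cong refl)
    fix k assume k: "k \<in> {0..d}"
    have "{K\<in>U. card K = k} = {K. K \<subseteq> X \<and> card K = k}" using k by (auto simp: U_def)
    then have "(\<Sum>K\<in>{K\<in>U. card K = k}. g K) = (\<Sum>K\<in>{K. K \<subseteq> X \<and> card K = k}. 1 / real n ^ max 1 k)"
      by (intro sum.cong) (auto simp: g_def)
    also have "\<dots> = real (card X choose k) / real n ^ max 1 k"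
      using n_subsets[OF finX, of k] by simp
    finally show "(\<Sum>K\<in>{K\<in>U. card K = k}. g K) = real (card X choose k) / real n ^ max 1 k" .
  qed
  also have "card X = n - card I" using I finI by (simp add: X_def card_Diff_subset)
  also have "(\<Sum>k\<in>{0..d}. real ((n - card I) choose k) / real n ^ max 1 k) \<le> (1 + real (n - card I)) / n + (real d - 1)"
  proof -
    define N where "N = n - card I"
    have Nn: "N \<le> n" by (simp add: N_def)
    define f where "f = (\<lambda>k. real (N choose k) / real n ^ max 1 k)"
    have s: "sum f {0..d} = f 0 + f 1 + sum f {2..d}"
      using d by (simp add: sum.atLeast_Suc_atMost numeral_2_eq_2)
    have f0: "f 0 = 1 / n" by (simp add: f_def)
    have f1: "f 1 = N / n" by (simp add: f_def)
    have fk: "f k \<le> 1" if "k \<in> {2..d}" for k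
    proof -
      have "N choose k \<le> n ^ k"
      proof (cases "k \<le> N")
        case True
        then have "N choose k \<le> N ^ k" by (rule binomial_le_pow)
        also have "\<dots> \<le> n ^ k" using Nn by (simp add: power_mono)
        finally show ?thesis .
      next
        case False then show ?thesis by (simp add: binomial_eq_0)
      qed
      then have "real (N choose k) \<le> real n ^ k" by (metis of_nat_le_iff of_nat_power)
      moreover have "max 1 k = k" using that by auto
      moreover have "real n ^ k > 0" using n by simp
      ultimately show ?thesis by (simp add: f_def)
    qed
    have "sum f {2..d} \<le> (\<Sum>k\<in>{2..d}. 1)" by (intro sum_mono fk)
    also have "\<dots> = real d - 1" using d by simp
    finally have "sum f {2..d} \<le> real d - 1" .
    then show ?thesis using s f0 f1 unfolding f_def N_def by (simp add: add_divide_distrib)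
  qed
  finally show ?thesis unfolding S_def g_def by (simp add: mult_left_mono)
qed



lemma Qm_bound:
  fixes p \<delta> L X Qm :: real and m :: nat
  assumes "0 < Qm" "Qm < 1" "L = - ln Qm" "real m \<ge> X / L" "0 < \<delta>" "0 < D" "n \<ge> 1"
    and "X = real kk * ln (real n) + ln (1 / \<delta>) + ln D"
  shows "Qm ^ m \<le> \<delta> / (D * real n ^ kk)"
proof -
  have L0: "L > 0" using assms by simp
  have "X \<le> real m * L" using assms(4) L0 by (simp add: field_simps)
  then have "ln (Qm ^ m) \<le> - X" using assms(1,3) by (simp add: ln_realpow)
  also have "- X = ln (\<delta> / (D * real n ^ kk))"
    using assms by (simp add: ln_div ln_mult ln_realpow)
  finally show ?thesis using assms by (simp add: ln_le_cancel_iff)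
qed

theorem lemma3:
  fixes n d m :: nat and p \<delta> :: real and I :: "nat set"
  assumes "n \<ge> 1" and "d \<ge> 1"
    and "0 < p" and "p < 1" and "0 < \<delta>" and "\<delta> < 1"
    and "I \<subseteq> {1..n}" and "card I \<le> d"
    and "m > 0"
    and "real m \<ge> Max ((\<lambda>w. ((real d - real w) * ln (real n) + ln (1 / \<delta>) + ln (real d ^ 2 * 2 ^ d))
             / min (ln (1 / (1 - 2 * p ^ d + 2 * p ^ (2 * d - w)))) (ln (1 / (1 + p ^ d - p ^ w)))) ` {0..d - 1})"
  shows "measure_pmf.prob (random_matrix m n p) {M. separable m n M I d} \<ge> 1 - \<delta>"
proof -
  define S where "S = {J. J \<subseteq> {1..n} \<and> card J \<le> d \<and> J \<noteq> I}"
  define E where "E = (\<lambda>J. {M. T_mat m J M = T_mat m I M})"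
  define D :: real where "D = real d ^ 2 * 2 ^ d"
  define kk where "kk = (\<lambda>J. max 1 (card (J - I)))"
  let ?R = "random_matrix m n p"
  have D0: "D > 0" using assms(2) by (simp add: D_def)
  have finS: "finite S" unfolding S_def by (auto intro: finite_subset[of _ "Pow {1..n}"])
  have finI: "finite I" using assms(7) finite_subset by blast
  have nsep: "{M. \<not> separable m n M I d} = (\<Union>J\<in>S. E J)"
    by (auto simp: separable_def S_def E_def)
  have perJ: "measure_pmf.prob ?R (E J) \<le> \<delta> / (D * real n ^ kk J)" if J: "J \<in> S" for J
  proof -
    have JS: "J \<subseteq> {1..n}" "card J \<le> d" "J \<noteq> I" using J by (auto simp: S_def)
    have finJ: "finite J" using JS(1) finite_subset by blast
    define q where "q = 1 - p ^ card I - p ^ card J + 2 * p ^ card (I \<union> J)"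
    have EJ: "E J = {M. \<forall>i\<in>{1..m}. T J (\<lambda>j. M (i, j)) = T I (\<lambda>j. M (i, j))}"
      by (auto simp: E_def T_mat_def fun_eq_iff)
    have pe: "measure_pmf.prob ?R (E J) = q ^ m"
      unfolding EJ random_matrix_def q_def using assms(3,4) JS(1) assms(7)
      by (intro rows_prob) auto
    have q0: "q \<ge> 0"
    proof -
      have "0 \<le> measure_pmf.prob (Pi_pmf ({1::nat}\<times>{1..n}) False (\<lambda>_. bernoulli_pmf (1-p)))
           {g. T J (\<lambda>j. g (1, j)) = T I (\<lambda>j. g (1, j))}" by (rule measure_nonneg)
      also have "\<dots> = q" unfolding q_def using assms(3,4) by (intro row_prob[OF assms(7) JS(1)]) auto
      finally show ?thesis .
    qed
    define w where "w = d - kk J"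
    have kkd: "kk J \<le> d" "kk J \<ge> 1"
    proof -
      have "card (J - I) \<le> card J" using finJ by (intro card_mono) auto
      then show "kk J \<le> d" "kk J \<ge> 1" using JS(2) assms(2) by (auto simp: kk_def)
    qed
    have w: "w \<in> {0..d - 1}" using kkd by (simp add: w_def)
    define A' where "A' = 1 - 2 * p ^ d + 2 * p ^ (2 * d - w)"
    define B' where "B' = 1 + p ^ d - p ^ w"
    have p0: "0 \<le> p" "p \<le> 1" using assms(3,4) by auto
    have pd0: "0 < p ^ d" "p ^ d < 1" using assms(2,3,4) by (auto simp: power_less_one_iff)
    have "p ^ (2 * d - w) \<ge> p ^ d * p ^ d"
    proof -
      have "p ^ (2 * d) \<le> p ^ (2 * d - w)" using p0 by (intro power_decreasing) auto
      then show ?thesis by (simp add: power_add[symmetric] mult_2)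
    qed
    then have "A' \<ge> 1 - 2 * p ^ d + 2 * (p ^ d * p ^ d)" by (simp add: A'_def)
    moreover have "1 - 2 * p ^ d + 2 * (p ^ d * p ^ d) > 0"
    proof -
      have "1 - 2 * p ^ d + 2 * (p ^ d * p ^ d) = (1 - p ^ d)^2 + (p ^ d)^2" by (simp add: power2_eq_square algebra_simps)
      then show ?thesis using pd0 by (simp add: add_pos_nonneg)
    qed
    ultimately have A0: "A' > 0" by linarith
    have "p ^ (2 * d - w) < p ^ d"
      using assms(3,4) kkd by (intro power_strict_decreasing) (auto simp: w_def)
    then have A1: "A' < 1" by (simp add: A'_def)
    have "p ^ w \<le> 1" using p0 by (simp add: power_le_one)
    then have B0: "B' > 0" using pd0 by (simp add: B'_def)
    have "p ^ d < p ^ w"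
      using assms(3,4) kkd by (intro power_strict_decreasing) (auto simp: w_def)
    then have B1: "B' < 1" by (simp add: B'_def)
    define Qm where "Qm = max A' B'"
    have Q01: "0 < Qm" "Qm < 1" using A0 A1 B0 B1 by (auto simp: Qm_def)
    have Lm: "min (ln (1 / A')) (ln (1 / B')) = - ln Qm"
      using A0 B0 by (cases "A' \<le> B'") (auto simp: Qm_def ln_div min_def)
    have qQ: "q \<le> Qm"
      using q_bound[OF assms(3,4) finI finJ JS(3) JS(2) assms(8)]
      unfolding q_def Qm_def A'_def B'_def w_def kk_def by simp
    have tm: "((real d - real w) * ln (real n) + ln (1 / \<delta>) + ln (real d ^ 2 * 2 ^ d))
             / min (ln (1 / (1 - 2 * p ^ d + 2 * p ^ (2 * d - w)))) (ln (1 / (1 + p ^ d - p ^ w)))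
          \<le> real m"
      using w by (intro order_trans[OF Max_ge assms(10)]) auto
    have dw: "real d - real w = real (kk J)" using kkd by (simp add: w_def of_nat_diff)
    have mm: "real m \<ge> (real (kk J) * ln (real n) + ln (1 / \<delta>) + ln D) / (- ln Qm)"
      using tm unfolding A'_def[symmetric] B'_def[symmetric] D_def[symmetric] Lm dw .
    have "q ^ m \<le> Qm ^ m" using q0 qQ by (intro power_mono) auto
    also have "\<dots> \<le> \<delta> / (D * real n ^ kk J)"
      by (rule Qm_bound[OF Q01 refl mm assms(5) D0 assms(1) refl])
    finally show ?thesis using pe by simp
  qed
  have "measure_pmf.prob ?R (\<Union>J\<in>S. E J) \<le> (\<Sum>J\<in>S. measure_pmf.prob ?R (E J))"
    by (intro measure_pmf.finite_measure_subadditive_finite finS) auto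
  also have "\<dots> \<le> (\<Sum>J\<in>S. \<delta> / D * (1 / real n ^ max 1 (card (J - I))))"
    using perJ by (intro sum_mono) (simp add: kk_def)
  also have "\<dots> = \<delta> / D * (\<Sum>J\<in>S. 1 / real n ^ max 1 (card (J - I)))"
    by (simp add: sum_distrib_left)
  also have "\<dots> \<le> \<delta> / D * (2 ^ card I * ((1 + real (n - card I)) / n + (real d - 1)))"
    using count_bound[OF assms(7,1,2)] assms(5) D0 unfolding S_def
    by (intro mult_left_mono) auto
  also have "2 ^ card I * ((1 + real (n - card I)) / n + (real d - 1)) \<le> D"
  proof -
    have cn: "card I \<le> n" using card_mono[OF _ assms(7)] by simp
    show ?thesis
    proof (cases "d = 1")
      case True
      then have "card I = 0 \<or> card I = 1" using assms(8) by auto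
      have DD: "D = 2" using True by (simp add: D_def)
      from \<open>card I = 0 \<or> card I = 1\<close> show ?thesis
      proof
        assume c: "card I = 0"
        have h1: "(1 + real (n - card I)) / n \<le> 2" unfolding c using assms(1) by (simp add: field_simps)
        have h2: "(2::real) ^ card I = 1" unfolding c by simp
        have h3: "real d - 1 = 0" using True by simp
        show ?thesis unfolding h2 h3 DD using h1 by simp
      next
        assume c: "card I = 1"
        have h1: "(1 + real (n - card I)) / n = 1" unfolding c using assms(1) by (simp add: of_nat_diff)
        have h2: "(2::real) ^ card I = 2" unfolding c by simp
        have h3: "real d - 1 = 0" using True by simp
        show ?thesis unfolding h1 h2 h3 DD by simp
      qed
    next
      case False
      then have d2: "d \<ge> 2" using assms(2) by simp
      have "(1 + real (n - card I)) / n \<le> 2"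
        using assms(1) cn by (simp add: field_simps)
      then have h1: "(1 + real (n - card I)) / n + (real d - 1) \<le> real d + 1" by simp
      have h2: "real d + 1 \<le> real d ^ 2"
      proof -
        have "real d * 2 \<le> real d * real d" using d2 by (intro mult_left_mono) auto
        moreover have "real d \<ge> 2" using d2 by simp
        ultimately show ?thesis unfolding power2_eq_square by linarith
      qed
      have h3: "(2::real) ^ card I \<le> 2 ^ d" using assms(8) by (intro power_increasing) auto
      have "2 ^ card I * ((1 + real (n - card I)) / n + (real d - 1)) \<le> 2 ^ d * (real d ^ 2)"
      proof (intro mult_mono)
        have "0 \<le> (1 + real (n - card I)) / n" by simp
        then show "0 \<le> (1 + real (n - card I)) / n + (real d - 1)" using d2 by simp
      qed (use h1 h2 h3 in auto)
      then show ?thesis by (simp add: D_def mult.commute)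
    qed
  qed
  then have "\<delta> / D * (2 ^ card I * ((1 + real (n - card I)) / n + (real d - 1))) \<le> \<delta> / D * D"
    using assms(5) D0 by (intro mult_left_mono) auto
  also have "\<delta> / D * D = \<delta>" using D0 by simp
  finally have un: "measure_pmf.prob ?R {M. \<not> separable m n M I d} \<le> \<delta>" unfolding nsep .
  have "measure_pmf.prob ?R {M. separable m n M I d} = 1 - measure_pmf.prob ?R {M. \<not> separable m n M I d}"
    using measure_pmf.prob_compl[of "{M. \<not> separable m n M I d}" ?R] by (simp add: Compl_eq_Diff_UNIV[symmetric] Collect_neg_eq)
  then show ?thesis using un by simp
qed

end
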